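(* For every integer $k\ge2$ there is no integer $m\ge3$ with $S_{\mathbb{R}}(m-1,k)=m^k$; equivalently, $F_k(m)\neq0$ for all integers $k\ge2$ and $m\ge3$.
   Context: For an integer $k\ge1$ and real $m$, define $S_{\mathbb{R}}(m-1,k)=\dfrac{(m-1)^{k+1}-1}{k+1}+\dfrac{1+(m-1)^k}{2}$ (the Euler–MacLaurin approximation of $\sum_{i=1}^{m-1}i^k$ with all Bernoulli correction terms omitted), and $F_k(m)=2(k+1)\big(S_{\mathbb{R}}(m-1,k)-m^k\big)=2(m-1)^{k+1}+(k+1)(m-1)^k-2(k+1)m^k+(k-1)$. *)

theory Defs
  imports Complex_Main
begin

text \<open>Euler--MacLaurin approximation of the power sum with Bernoulli corrections omitted:
  S_R(x,k) = (x^(k+1) - 1)/(k+1) + (1 + x^k)/2, evaluated at real x.\<close>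
definition S_R :: "real \<Rightarrow> nat \<Rightarrow> real" where
  "S_R x k = (x ^ (k + 1) - 1) / real (k + 1) + (1 + x ^ k) / 2"

end

theory Submission
  imports Defs
begin

lemma binom3:
  fixes n :: int assumes "n \<ge> 0"
  shows "2 * n^2 * (n+1)^k \<ge> n^k * (2*n^2 + 2*int k*n + int k*(int k - 1))"
proof (induction k)
  case 0 then show ?case by simp
next
  case (Suc k)
  have "2 * n^2 * (n+1)^Suc k = (n+1) * (2 * n^2 * (n+1)^k)" by (simp add: algebra_simps)
  also have "\<dots> \<ge> (n+1) * (n^k * (2*n^2 + 2*int k*n + int k*(int k - 1)))"
    using Suc assms by (intro mult_left_mono) auto
  finally have 1: "2 * n^2 * (n+1)^Suc k \<ge> (n+1) * (n^k * (2*n^2 + 2*int k*n + int k*(int k - 1)))" .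
  have "(n+1) * (n^k * (2*n^2 + 2*int k*n + int k*(int k - 1)))
      = n^Suc k * (2*n^2 + 2*int (Suc k)*n + int (Suc k)*(int (Suc k) - 1)) + n^k * (int k*(int k - 1))"
    by (simp add: algebra_simps power2_eq_square)
  moreover have "n^k * (int k*(int k - 1)) \<ge> 0" using assms by (cases k) auto
  ultimately show ?case using 1 by linarith
qed

lemma pow_mod:
  fixes n :: int shows "\<exists>q. (n+1)^k = 1 + n*q"
proof (induction k)
  case 0 then show ?case by (auto intro: exI[of _ 0])
next
  case (Suc k)
  then obtain q where "(n+1)^k = 1 + n*q" by blast
  then have "(n+1)^Suc k = 1 + n*(q*n + q + 1)" by (simp add: algebra_simps)
  then show ?case by blast
qed

lemma poly_pos:
  fixes n k :: int
  assumes "k \<ge> 9" "n \<ge> 2" "n \<le> k+3"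
  shows "2*(k+1)*(2*n^2+2*k*n+k*(k-1)) - (4*n^3+2*(k+1)*n^2+2*(k-1)) > 0"
proof -
  have a: "n^3 \<le> (k+3)*n^2" using assms by (simp add: power3_eq_cube power2_eq_square mult_right_mono)
  have b: "n^2 \<le> (k+3)*n" using assms by (simp add: power2_eq_square mult_right_mono)
  have kk: "k*k \<ge> 9*k" using assms by (intro mult_right_mono) auto
  have c0: "k^2-6*k-15 \<ge> 0" using kk assms unfolding power2_eq_square by linarith
  have c: "(k^2-6*k-15)*n \<ge> 0" using assms c0 by simp
  have h1: "-2*n^3 + (k+1)*n^2 + 2*k*(k+1)*n + (k+1)*k*(k-1) - k + 1
      \<ge> -(k+5)*n^2 + 2*k*(k+1)*n + (k+1)*k*(k-1) - k + 1"
    using a by (simp add: algebra_simps)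
  have h2: "-(k+5)*n^2 \<ge> -(k+5)*((k+3)*n)" using b assms by simp
  have "2*((k^2-6*k-15)*n + ((k+1)*k*(k-1) - k + 1)) = 2*(-(k+5)*((k+3)*n) + 2*k*(k+1)*n + (k+1)*k*(k-1) - k + 1)"
    by (simp add: algebra_simps power2_eq_square)
  also have "\<dots> \<le> 2*(-(k+5)*n^2 + 2*k*(k+1)*n + (k+1)*k*(k-1) - k + 1)"
    using h2 by simp
  also have "\<dots> \<le> 2*(-2*n^3 + (k+1)*n^2 + 2*k*(k+1)*n + (k+1)*k*(k-1) - k + 1)"
    using h1 by simp
  also have "\<dots> = 2*(k+1)*(2*n^2+2*k*n+k*(k-1)) - (4*n^3+2*(k+1)*n^2+2*(k-1))"
    by (simp add: algebra_simps power2_eq_square power3_eq_cube)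
  finally have X: "2*(k+1)*(2*n^2+2*k*n+k*(k-1)) - (4*n^3+2*(k+1)*n^2+2*(k-1))
     \<ge> 2*((k^2-6*k-15)*n + ((k+1)*k*(k-1) - k + 1))" .
  have ck: "(k+1)*k*(k-1) - k + 1 > 0"
  proof -
    have "(k+1)*k*(k-1) = k*(k*k) - k" by (simp add: algebra_simps)
    moreover have "k*(k*k) \<ge> k*(9*k)" using kk assms by (intro mult_left_mono) auto
    ultimately show ?thesis using kk assms by linarith
  qed
  have "(k^2-6*k-15)*n + ((k+1)*k*(k-1) - k + 1) > 0" using c ck by linarith
  then have "0 < 2*((k^2-6*k-15)*n + ((k+1)*k*(k-1) - k + 1))" by simp
  then show ?thesis using X by (rule less_le_trans)
qed

lemma small:
  fixes n :: int
  assumes "k \<in> {2..8}" "n \<in> {2..11}"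
  shows "2*n^(k+1) + (int k+1)*n^k + (int k - 1) \<noteq> 2*(int k+1)*(n+1)^k"
proof -
  have hk: "k = 2 \<or> k = 3 \<or> k = 4 \<or> k = 5 \<or> k = 6 \<or> k = 7 \<or> k = 8" using assms by auto
  have hn: "n = 2 \<or> n = 3 \<or> n = 4 \<or> n = 5 \<or> n = 6 \<or> n = 7 \<or> n = 8 \<or> n = 9 \<or> n = 10 \<or> n = 11" using assms by simp presburger
  show ?thesis using hk hn by (elim disjE) simp_all
qed

theorem mainTheorem12:
  fixes k :: nat and m :: int
  assumes "k \<ge> 2" and "m \<ge> 3"
  shows "S_R (real_of_int m - 1) k \<noteq> (real_of_int m) ^ k"
proof
  assume H: "S_R (real_of_int m - 1) k = (real_of_int m) ^ k"
  define n where "n = m - 1"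
  have n2: "n \<ge> 2" using assms n_def by simp
  have mn: "m = n + 1" using n_def by simp
  have "real_of_int (2*n^(k+1) + (int k+1)*n^k + (int k - 1)) = real_of_int (2*(int k+1)*(n+1)^k)"
    using H unfolding S_R_def mn by (simp add: field_simps)
  then have E: "2*n^(k+1) + (int k+1)*n^k + (int k - 1) = 2*(int k+1)*(n+1)^k"
    using of_int_eq_iff by blast
  obtain q where q: "(n+1)^k = 1 + n*q" using pow_mod by blast
  obtain j where kj: "k = Suc j" using assms by (cases k) auto
  have "int k + 3 = n * (2*n^k + (int k+1)*n^j - 2*(int k+1)*q)"
  proof -
    have e1: "n^(k+1) = n*n^k" by simp
    have e2: "n^k = n*n^j" using kj by simp
    have E2: "2*(n*n^k) + (int k+1)*(n*n^j) + (int k - 1) = 2*(int k+1)*(1 + n*q)"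
      using E unfolding e1 q by (metis e2)
    show ?thesis using E2 by (simp add: algebra_simps)
  qed
  then have "n dvd int k + 3" by simp
  then have nk: "n \<le> int k + 3" using n2 by (simp add: zdvd_imp_le)
  show False
  proof (cases "k \<ge> 9")
    case True
    have B: "2 * n^2 * (n+1)^k \<ge> n^k * (2*n^2 + 2*int k*n + int k*(int k - 1))"
      using binom3 n2 by simp
    have A: "n^k \<ge> n^2" using n2 assms by (simp add: power_increasing)
    have P: "2*(int k+1)*(2*n^2+2*int k*n+int k*(int k-1)) - (4*n^3+2*(int k+1)*n^2+2*(int k-1)) > 0"
      using poly_pos[of "int k" n] True n2 nk by simp
    have npos: "n^k > 0" using n2 by simp
    have "2*n^2*(2*n^(k+1) + (int k+1)*n^k + (int k - 1)) = 2*n^2*(2*(int k+1)*(n+1)^k)"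
      using E by simp
    moreover have "2*n^2*(2*(int k+1)*(n+1)^k) \<ge> 2*(int k+1) * (n^k * (2*n^2 + 2*int k*n + int k*(int k - 1)))"
      using B by (simp add: mult.assoc mult_left_mono)
    moreover have "2*n^2*(2*n^(k+1) + (int k+1)*n^k + (int k - 1)) \<le> n^k*(4*n^3+2*(int k+1)*n^2+2*(int k-1))"
    proof -
      have i1: "n^2*(2*(int k - 1)) \<le> n^k * (2*(int k - 1))" using A assms by (intro mult_right_mono) auto
      have i2: "2*n^2*(2*n^(k+1) + (int k+1)*n^k + (int k - 1)) = n^k*(4*n^3+2*(int k+1)*n^2) + n^2*(2*(int k - 1))"
        by (simp add: algebra_simps power_add power2_eq_square power3_eq_cube)
      have i3: "n^k*(4*n^3+2*(int k+1)*n^2+2*(int k-1)) = n^k*(4*n^3+2*(int k+1)*n^2) + n^k * (2*(int k - 1))"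
        by (simp add: algebra_simps)
      show ?thesis using i1 i2 i3 by linarith
    qed
    moreover have "n^k * (2*(int k+1)*(2*n^2+2*int k*n+int k*(int k-1)) - (4*n^3+2*(int k+1)*n^2+2*(int k-1))) > 0"
      using P npos by simp
    moreover have "n^k * (2*(int k+1)*(2*n^2+2*int k*n+int k*(int k-1)) - (4*n^3+2*(int k+1)*n^2+2*(int k-1)))
       = 2*(int k+1) * (n^k * (2*n^2 + 2*int k*n + int k*(int k - 1))) - n^k*(4*n^3+2*(int k+1)*n^2+2*(int k-1))"
      by (simp add: algebra_simps)
    ultimately show False by linarith
  next
    case False
    then have "k \<in> {2..8}" using assms by auto
    moreover have "n \<in> {2..11}" using n2 nk False by auto
    ultimately show False using E small by blast
  qed
qed

end
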